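(* Assume the standing assumptions in the context. There exists at most one bounded constrained viscosity solution $v=(v_1,v_2)$ on $[\underline{x},+\infty)$ of the system $$\rho v_j(x)=H(x,y_j,Dv_j(x))+\lambda_j\big(v_{\bar\jmath}(x)-v_j(x)\big),\qquad j=1,2,\ \bar\jmath=3-j.$$
   Context: Standing assumptions: $\rho>0$; $-\infty<r<\rho$; $0<y_1<y_2$; $\gamma>1$; $\underline{x}\le0$ with $\rho\underline{x}+y_j>0$ for $j=1,2$; $\lambda_1,\lambda_2\ge0$ constants. Utility $u(c)=\frac{c^{1-\gamma}}{1-\gamma}$; Hamiltonian $H(x,y_j,p)=\sup_{c\ge0}\{u(c)+(rx+y_j-c)p\}$, equal to $(rx+y_j)p+\frac{\gamma}{1-\gamma}p^{1-1/\gamma}$ for $p\ge0$ and $+\infty$ for $p<0$. Viscosity subsolution on $S\subseteq[\underline{x},\infty)$: u.s.c. pair $v$ such that whenever $\varphi$ smooth, $j\in\{1,2\}$, and $v_j-\varphi$ has a local max (relative to $[\underline{x},\infty)$) at $x_0\in S$, then $\rho v_j(x_0)\le H(x_0,y_j,D\varphi(x_0))+\lambda_j(v_{\bar\jmath}(x_0)-v_j(x_0))$. Viscosity supersolution on $S$: l.s.c. pair with the reverse inequality at local minima $x_0\in S$. A constrained viscosity solution is a continuous pair that is a viscosity supersolution on $(\underline{x},\infty)$ and a viscosity subsolution on $[\underline{x},\infty)$. *)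

theory Defs
  imports "HOL-Analysis.Analysis" "HOL-Library.Extended_Real"
begin

text \<open>Pairs v = (v_1, v_2) are represented as v :: nat => real => real, used at j in {1,2};
  the index bar j is 3 - j.  Parameters y_j and lambda_j likewise as functions of j.\<close>

definition CRRA :: "real \<Rightarrow> real \<Rightarrow> real" where
  "CRRA \<gamma> c = c powr (1 - \<gamma>) / (1 - \<gamma>)"

text \<open>Hamiltonian H(x,y,p) = sup over c of u(c) + (r x + y - c) p, extended-real valued.
  Since gamma > 1, u(0) = -infinity, so c = 0 never contributes and the sup is over c > 0.\<close>
definition Ham :: "real \<Rightarrow> real \<Rightarrow> real \<Rightarrow> real \<Rightarrow> real \<Rightarrow> ereal" where
  "Ham r \<gamma> x y p = (SUP c \<in> {0<..}. ereal (CRRA \<gamma> c + (r * x + y - c) * p))"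

definition smooth_fun :: "(real \<Rightarrow> real) \<Rightarrow> bool" where
  "smooth_fun \<phi> \<longleftrightarrow> (\<forall>n x. ((deriv ^^ n) \<phi>) differentiable (at x))"

definition usc_on :: "real set \<Rightarrow> (real \<Rightarrow> real) \<Rightarrow> bool" where
  "usc_on D f \<longleftrightarrow> (\<forall>x\<in>D. \<forall>e>0. \<exists>d>0. \<forall>z\<in>D. \<bar>z - x\<bar> < d \<longrightarrow> f z < f x + e)"

definition lsc_on :: "real set \<Rightarrow> (real \<Rightarrow> real) \<Rightarrow> bool" where
  "lsc_on D f \<longleftrightarrow> (\<forall>x\<in>D. \<forall>e>0. \<exists>d>0. \<forall>z\<in>D. \<bar>z - x\<bar> < d \<longrightarrow> f x - e < f z)"

definition loc_max_rel :: "real set \<Rightarrow> (real \<Rightarrow> real) \<Rightarrow> real \<Rightarrow> bool" where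
  "loc_max_rel D f x0 \<longleftrightarrow> (\<exists>d>0. \<forall>z\<in>D. \<bar>z - x0\<bar> < d \<longrightarrow> f z \<le> f x0)"

definition loc_min_rel :: "real set \<Rightarrow> (real \<Rightarrow> real) \<Rightarrow> real \<Rightarrow> bool" where
  "loc_min_rel D f x0 \<longleftrightarrow> (\<exists>d>0. \<forall>z\<in>D. \<bar>z - x0\<bar> < d \<longrightarrow> f x0 \<le> f z)"

definition visc_sub :: "real \<Rightarrow> real \<Rightarrow> real \<Rightarrow> (nat \<Rightarrow> real) \<Rightarrow> (nat \<Rightarrow> real) \<Rightarrow> real
    \<Rightarrow> real set \<Rightarrow> (nat \<Rightarrow> real \<Rightarrow> real) \<Rightarrow> bool" where
  "visc_sub \<rho> r \<gamma> y lam xl S v \<longleftrightarrow>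
     (\<forall>j\<in>{1,2}. usc_on {xl..} (v j)) \<and>
     (\<forall>\<phi> j x0. smooth_fun \<phi> \<longrightarrow> j \<in> {1,2} \<longrightarrow> x0 \<in> S \<longrightarrow>
        loc_max_rel {xl..} (\<lambda>x. v j x - \<phi> x) x0 \<longrightarrow>
        ereal (\<rho> * v j x0) \<le> Ham r \<gamma> x0 (y j) (deriv \<phi> x0) + ereal (lam j * (v (3 - j) x0 - v j x0)))"

definition visc_super :: "real \<Rightarrow> real \<Rightarrow> real \<Rightarrow> (nat \<Rightarrow> real) \<Rightarrow> (nat \<Rightarrow> real) \<Rightarrow> real
    \<Rightarrow> real set \<Rightarrow> (nat \<Rightarrow> real \<Rightarrow> real) \<Rightarrow> bool" where
  "visc_super \<rho> r \<gamma> y lam xl S v \<longleftrightarrow>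
     (\<forall>j\<in>{1,2}. lsc_on {xl..} (v j)) \<and>
     (\<forall>\<phi> j x0. smooth_fun \<phi> \<longrightarrow> j \<in> {1,2} \<longrightarrow> x0 \<in> S \<longrightarrow>
        loc_min_rel {xl..} (\<lambda>x. v j x - \<phi> x) x0 \<longrightarrow>
        ereal (\<rho> * v j x0) \<ge> Ham r \<gamma> x0 (y j) (deriv \<phi> x0) + ereal (lam j * (v (3 - j) x0 - v j x0)))"

definition constrained_visc_sol :: "real \<Rightarrow> real \<Rightarrow> real \<Rightarrow> (nat \<Rightarrow> real) \<Rightarrow> (nat \<Rightarrow> real) \<Rightarrow> real
    \<Rightarrow> (nat \<Rightarrow> real \<Rightarrow> real) \<Rightarrow> bool" where
  "constrained_visc_sol \<rho> r \<gamma> y lam xl v \<longleftrightarrow>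
     (\<forall>j\<in>{1,2}. continuous_on {xl..} (v j)) \<and>
     visc_super \<rho> r \<gamma> y lam xl {xl<..} v \<and>
     visc_sub \<rho> r \<gamma> y lam xl {xl..} v"

definition bounded_pair :: "real \<Rightarrow> (nat \<Rightarrow> real \<Rightarrow> real) \<Rightarrow> bool" where
  "bounded_pair xl v \<longleftrightarrow> (\<exists>M. \<forall>j\<in>{1,2}. \<forall>x\<in>{xl..}. \<bar>v j x\<bar> \<le> M)"

end

theory Submission
  imports Defs
begin


lemma quad_deriv: "((\<lambda>x::real. a*x*x + b*x + c) has_real_derivative (2*a*x + b)) (at x)"
  by (auto intro!: derivative_eq_intros simp: algebra_simps)

lemma deriv_quad: "deriv (\<lambda>x::real. a*x*x + b*x + c) x = 2*a*x + b"
  using quad_deriv by (rule DERIV_imp_deriv)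

lemma smooth_quad: "smooth_fun (\<lambda>x::real. a*x*x + b*x + c)"
proof -
  have ex: "\<exists>a b c. (deriv ^^ n) (\<lambda>x::real. a0*x*x + b0*x + c0) = (\<lambda>x. a*x*x + b*x + c)" for n a0 b0 c0
  proof (induction n)
    case 0 then show ?case by auto
  next
    case (Suc n)
    then obtain a b c where e: "(deriv ^^ n) (\<lambda>x::real. a0*x*x + b0*x + c0) = (\<lambda>x. a*x*x + b*x + c)" by blast
    have "(deriv ^^ Suc n) (\<lambda>x::real. a0*x*x + b0*x + c0) = (\<lambda>x. 0*x*x + (2*a)*x + b)"
      using deriv_quad by (simp add: e fun_eq_iff)
    then show ?case by blast
  qed
  show ?thesis unfolding smooth_fun_def
  proof (intro allI)
    fix n x
    obtain a' b' c' where e: "(deriv ^^ n) (\<lambda>x::real. a*x*x + b*x + c) = (\<lambda>x. a'*x*x + b'*x + c')"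
      using ex by blast
    show "((deriv ^^ n) (\<lambda>x::real. a*x*x + b*x + c)) differentiable (at x)"
      unfolding e using quad_deriv[of a' b' c' x] real_differentiable_def by blast
  qed
qed

lemma Ham_not_minf: "Ham r \<gamma> x y p \<noteq> -\<infinity>"
proof -
  have "ereal (CRRA \<gamma> 1 + (r * x + y - 1) * p) \<le> Ham r \<gamma> x y p"
    unfolding Ham_def by (rule SUP_upper) auto
  then show ?thesis by auto
qed

lemma Ham_shift:
  assumes "p2 \<le> p1"
  shows "Ham r \<gamma> x1 yj p1 \<le> Ham r \<gamma> x2 yj p2 + ereal ((r*x1+yj)*p1 - (r*x2+yj)*p2)"
  unfolding Ham_def
proof (rule SUP_least)
  fix c :: real assume c: "c \<in> {0<..}"
  have "CRRA \<gamma> c + (r * x1 + yj - c) * p1 \<le> (CRRA \<gamma> c + (r * x2 + yj - c) * p2) + ((r*x1+yj)*p1 - (r*x2+yj)*p2)"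
    using c assms by (simp add: algebra_simps mult_left_mono)
  also have "ereal \<dots> = ereal (CRRA \<gamma> c + (r * x2 + yj - c) * p2) + ereal ((r*x1+yj)*p1 - (r*x2+yj)*p2)" by simp
  also have "\<dots> \<le> (SUP c\<in>{0<..}. ereal (CRRA \<gamma> c + (r * x2 + yj - c) * p2)) + ereal ((r*x1+yj)*p1 - (r*x2+yj)*p2)"
    by (rule add_right_mono, rule SUP_upper) (use c in auto)
  finally show "ereal (CRRA \<gamma> c + (r * x1 + yj - c) * p1) \<le> \<dots>" by simp
qed

lemma comparison:
  fixes \<rho> r \<gamma> xl :: real and y lam :: "nat \<Rightarrow> real" and u w :: "nat \<Rightarrow> real \<Rightarrow> real"
  assumes rho: "\<rho> > 0" and rr: "r < \<rho>" and l1: "lam 1 \<ge> 0" and l2: "lam 2 \<ge> 0"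
    and cu: "\<forall>j\<in>{1,2}. continuous_on {xl..} (u j)"
    and cw: "\<forall>j\<in>{1,2}. continuous_on {xl..} (w j)"
    and bu: "bounded_pair xl u" and bw: "bounded_pair xl w"
    and sub: "visc_sub \<rho> r \<gamma> y lam xl {xl..} u"
    and sup: "visc_super \<rho> r \<gamma> y lam xl {xl<..} w"
    and j0: "j0 \<in> {1,2}" and x0: "xl \<le> x0"
  shows "u j0 x0 \<le> w j0 x0"
proof (rule ccontr)
  assume neg: "\<not> ?thesis"
  define \<delta>0 where "\<delta>0 = u j0 x0 - w j0 x0"
  have d0: "\<delta>0 > 0" using neg by (simp add: \<delta>0_def)
  obtain M1 where M1: "\<forall>j\<in>{1,2}. \<forall>x\<in>{xl..}. \<bar>u j x\<bar> \<le> M1" using bu unfolding bounded_pair_def by blast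
  obtain M2 where M2: "\<forall>j\<in>{1,2}. \<forall>x\<in>{xl..}. \<bar>w j x\<bar> \<le> M2" using bw unfolding bounded_pair_def by blast
  define C where "C = max (max M1 M2) 0"
  have C0: "C \<ge> 0" by (simp add: C_def)
  have Cu: "\<bar>u j x\<bar> \<le> C" if "j \<in> {1,2}" "x \<ge> xl" for j x using M1 that unfolding C_def by force
  have Cw: "\<bar>w j x\<bar> \<le> C" if "j \<in> {1,2}" "x \<ge> xl" for j x using M2 that unfolding C_def by force
  define \<tau> where "\<tau> = min (1/2) (\<rho>*\<delta>0/(32*(\<bar>r\<bar>+1)))"
  have tau0: "\<tau> > 0" "\<tau> \<le> 1/2" "4*\<bar>r\<bar>*\<tau> \<le> \<rho>*\<delta>0/8"
  proof -
    show "\<tau> > 0" using rho d0 by (auto simp: \<tau>_def)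
    show "\<tau> \<le> 1/2" unfolding \<tau>_def by (rule min.cobounded1)
    have "\<tau> \<le> \<rho>*\<delta>0/(32*(\<bar>r\<bar>+1))" by (simp add: \<tau>_def)
    hence "(\<bar>r\<bar>+1) * \<tau> \<le> \<rho>*\<delta>0/32" by (simp add: field_simps)
    moreover have "\<bar>r\<bar> * \<tau> \<le> (\<bar>r\<bar>+1) * \<tau>" using \<open>\<tau> > 0\<close> by simp
    ultimately show "4*\<bar>r\<bar>*\<tau> \<le> \<rho>*\<delta>0/8" by linarith
  qed
  define \<eta> where "\<eta> = min (\<tau>^2/2) (\<delta>0/4)"
  have eta0: "\<eta> > 0" "\<eta> \<le> \<tau>^2/2" "\<eta> \<le> \<delta>0/4" using tau0 d0 by (auto simp: \<eta>_def)
  have eta1: "\<eta> \<le> 1/8"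
  proof -
    have "\<tau>^2 \<le> (1/2)^2" using tau0 by (intro power_mono) auto
    thus ?thesis using eta0 by (simp add: power2_eq_square)
  qed
  define A where "A = 2*\<bar>r\<bar>*\<bar>xl\<bar>+2*\<bar>y 1\<bar>+2*\<bar>y 2\<bar>"
  have A0: "A \<ge> 0" by (simp add: A_def)
  define \<beta> where "\<beta> = min (\<delta>0/(4*(2*(x0-xl)+1))) (\<rho>*\<delta>0/(8*(A+1)))"
  have beta0: "\<beta> > 0" "\<beta>*(2*(x0-xl)+1) \<le> \<delta>0/4" "\<beta>*A \<le> \<rho>*\<delta>0/8"
  proof -
    show "\<beta> > 0" using d0 rho x0 A0 by (simp add: \<beta>_def)
    have "\<beta> \<le> \<delta>0/(4*(2*(x0-xl)+1))" by (simp add: \<beta>_def)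
    thus "\<beta>*(2*(x0-xl)+1) \<le> \<delta>0/4" using x0 by (simp add: field_simps)
    have "\<beta> \<le> \<rho>*\<delta>0/(8*(A+1))" by (simp add: \<beta>_def)
    hence "\<beta>*(A+1) \<le> \<rho>*\<delta>0/8" using A0 by (simp add: field_simps)
    thus "\<beta>*A \<le> \<rho>*\<delta>0/8" using \<open>\<beta> > 0\<close> by (simp add: algebra_simps)
  qed
  define R where "R = 2*C/\<beta> + (x0-xl) + 1"
  have R1: "\<beta>*R > 2*C"
  proof -
    have "\<beta>*R = 2*C + \<beta>*(x0-xl+1)" using beta0 by (simp add: R_def field_simps)
    moreover have "\<beta>*(x0-xl+1) > 0" using beta0 x0 by simp
    ultimately show ?thesis by linarith
  qed
  have R2: "x0 + 1 \<le> xl + R" using beta0 C0 by (simp add: R_def)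
  define S where "S = {xl..xl+R+1}"
  have ucS: "\<exists>d>0. \<forall>a\<in>S. \<forall>b\<in>S. \<bar>a - b\<bar> < d \<longrightarrow> \<bar>w j a - w j b\<bar> < \<eta>" if j: "j \<in> {1,2}" for j
  proof -
    have "continuous_on S (w j)" using cw j by (auto simp: S_def intro: continuous_on_subset)
    hence "uniformly_continuous_on S (w j)" unfolding S_def by (intro compact_uniformly_continuous) auto
    then obtain d where "d > 0" "\<forall>a\<in>S. \<forall>b\<in>S. dist b a < d \<longrightarrow> dist (w j b) (w j a) < \<eta>"
      unfolding uniformly_continuous_on_def using eta0 by blast
    thus ?thesis by (auto simp: dist_real_def)
  qed
  obtain da where da: "da > 0" "\<forall>a\<in>S. \<forall>b\<in>S. \<bar>a - b\<bar> < da \<longrightarrow> \<bar>w 1 a - w 1 b\<bar> < \<eta>" using ucS[of 1] by auto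
  obtain db where db: "db > 0" "\<forall>a\<in>S. \<forall>b\<in>S. \<bar>a - b\<bar> < db \<longrightarrow> \<bar>w 2 a - w 2 b\<bar> < \<eta>" using ucS[of 2] by auto
  define \<delta> where "\<delta> = min da db"
  have delta: "\<delta> > 0" "\<And>j a b. j \<in> {1,2} \<Longrightarrow> a \<in> S \<Longrightarrow> b \<in> S \<Longrightarrow> \<bar>a - b\<bar> < \<delta> \<Longrightarrow> \<bar>w j a - w j b\<bar> < \<eta>"
    using da db by (auto simp: \<delta>_def)
  define \<epsilon> where "\<epsilon> = min 1 (min (\<delta>/(2*(2*C+1))) (\<eta>/(\<beta>*(2*C+1))))"
  have eps0: "\<epsilon> > 0" "\<epsilon> \<le> 1" "\<epsilon>*(2*C+1) \<le> \<delta>/2" "\<beta>*\<epsilon>*(2*C+1) \<le> \<eta>"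
  proof -
    show "\<epsilon> > 0" "\<epsilon> \<le> 1" using delta eta0 beta0 C0 by (auto simp: \<epsilon>_def)
    have "\<epsilon> \<le> \<delta>/(2*(2*C+1))" by (simp add: \<epsilon>_def)
    thus "\<epsilon>*(2*C+1) \<le> \<delta>/2" using C0 by (simp add: field_simps)
    have "\<epsilon> \<le> \<eta>/(\<beta>*(2*C+1))" by (simp add: \<epsilon>_def)
    moreover have "\<beta>*(2*C+1) > 0" using C0 beta0 by simp
    ultimately have "\<epsilon>*(\<beta>*(2*C+1)) \<le> \<eta>" by (simp add: pos_le_divide_eq)
    thus "\<beta>*\<epsilon>*(2*C+1) \<le> \<eta>" by (simp add: algebra_simps)
  qed
  have eps_delta: "\<epsilon> < \<delta>"
  proof -
    have "\<epsilon> \<le> \<epsilon>*(2*C+1)" using eps0 C0 by simp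
    thus ?thesis using eps0 delta by linarith
  qed
  define F where "F j x z = u j x - w j z - (x - z + \<epsilon>)^2/\<epsilon>^2 - \<beta>*(x+z-2*xl)" for j x z
  define K where "K = {xl..xl+R} \<times> {xl..xl+R}"
  have Kc: "compact K" "K \<noteq> {}" using R2 x0 by (auto simp: K_def intro: compact_Times)
  have contF: "continuous_on K (\<lambda>p. F j (fst p) (snd p))" if j: "j \<in> {1,2}" for j
  proof -
    have "continuous_on K (\<lambda>p. u j (fst p))"
      by (rule continuous_on_compose2[OF _ continuous_on_fst[OF continuous_on_id]]) (use cu j in \<open>auto simp: K_def\<close>)
    moreover have "continuous_on K (\<lambda>p. w j (snd p))"
      by (rule continuous_on_compose2[OF _ continuous_on_snd[OF continuous_on_id]]) (use cw j in \<open>auto simp: K_def\<close>)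
    ultimately show ?thesis unfolding F_def using eps0 by (intro continuous_intros) auto
  qed
  obtain p1 where p1: "p1 \<in> K" "\<forall>q\<in>K. F 1 (fst q) (snd q) \<le> F 1 (fst p1) (snd p1)"
    using continuous_attains_sup[OF Kc contF[of 1]] by auto
  obtain p2 where p2: "p2 \<in> K" "\<forall>q\<in>K. F 2 (fst q) (snd q) \<le> F 2 (fst p2) (snd p2)"
    using continuous_attains_sup[OF Kc contF[of 2]] by auto
  obtain j1 xb yb where j1: "j1 \<in> {1,2}" and xbK: "xb \<in> {xl..xl+R}" and ybK: "yb \<in> {xl..xl+R}"
    and maxK: "\<And>j x z. j \<in> {1,2} \<Longrightarrow> (x,z) \<in> K \<Longrightarrow> F j x z \<le> F j1 xb yb"
  proof (cases "F 1 (fst p1) (snd p1) \<le> F 2 (fst p2) (snd p2)")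
    case True
    have m: "\<And>j x z. j \<in> {1,2} \<Longrightarrow> (x,z) \<in> K \<Longrightarrow> F j x z \<le> F 2 (fst p2) (snd p2)"
      using p1(2) p2(2) True by fastforce
    show ?thesis
      apply (rule that[of 2 "fst p2" "snd p2"])
      using p2(1) m by (auto simp: K_def mem_Times_iff)
  next
    case False
    have m: "\<And>j x z. j \<in> {1,2} \<Longrightarrow> (x,z) \<in> K \<Longrightarrow> F j x z \<le> F 1 (fst p1) (snd p1)"
      using p1(2) p2(2) False by fastforce
    show ?thesis
      apply (rule that[of 1 "fst p1" "snd p1"])
      using p1(1) m by (auto simp: K_def mem_Times_iff)
  qed
  have Fx0: "F j0 x0 (x0+\<epsilon>) \<ge> \<delta>0/2"
  proof -
    have "\<bar>w j0 (x0+\<epsilon>) - w j0 x0\<bar> < \<eta>"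
      by (rule delta(2)) (use j0 x0 eps0 eps_delta R2 in \<open>auto simp: S_def\<close>)
    moreover have "\<beta>*(2*x0+\<epsilon>-2*xl) \<le> \<beta>*(2*(x0-xl)+1)" using beta0 eps0 by (intro mult_left_mono) auto
    moreover have "F j0 x0 (x0+\<epsilon>) = u j0 x0 - w j0 (x0+\<epsilon>) - \<beta>*(2*x0+\<epsilon>-2*xl)" by (simp add: F_def)
    ultimately show ?thesis using beta0 eta0 unfolding \<delta>0_def by (simp only: abs_less_iff; argo)
  qed
  have Fmax: "F j1 xb yb \<ge> \<delta>0/2"
    using maxK[OF j0, of x0 "x0+\<epsilon>"] Fx0 x0 R2 eps0 by (auto simp: K_def)
  have glob: "F j x z \<le> F j1 xb yb" if j: "j \<in> {1,2}" and x: "x \<ge> xl" and z: "z \<ge> xl" for j x z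
  proof (cases "(x,z) \<in> K")
    case True thus ?thesis using maxK j by blast
  next
    case False
    hence "x + z - 2*xl > R" using x z by (auto simp: K_def)
    hence "\<beta>*(x+z-2*xl) \<ge> \<beta>*R" using beta0 by (intro mult_left_mono) auto
    moreover have "u j x \<le> C" "- w j z \<le> C" using Cu[OF j x] Cw[OF j z] by auto
    moreover have "(x - z + \<epsilon>)^2/\<epsilon>^2 \<ge> 0" by simp
    ultimately have "F j x z < 0" using R1 unfolding F_def by linarith
    thus ?thesis using Fmax d0 by linarith
  qed
  define d where "d = xb - yb + \<epsilon>"
  define t where "t = d/\<epsilon>"
  have d_t: "d = \<epsilon>*t" using eps0 by (simp add: t_def)
  have pen: "(xb - yb + \<epsilon>)^2/\<epsilon>^2 = t^2" by (simp add: t_def d_def power_divide)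
  have xbl: "xb \<ge> xl" "xb \<le> xl + R" using xbK by auto
  have ybl: "yb \<ge> xl" "yb \<le> xl + R" using ybK by auto
  have tineq: "t^2 \<le> w j1 (xb+\<epsilon>) - w j1 yb + \<beta>*\<epsilon>*t"
  proof -
    have "F j1 xb (xb+\<epsilon>) \<le> F j1 xb yb" using glob[OF j1 xbl(1), of "xb+\<epsilon>"] xbl eps0 by simp
    moreover have "F j1 xb (xb+\<epsilon>) = u j1 xb - w j1 (xb+\<epsilon>) - \<beta>*(2*xb+\<epsilon>-2*xl)" by (simp add: F_def)
    moreover have "F j1 xb yb = u j1 xb - w j1 yb - t^2 - \<beta>*(xb+yb-2*xl)" by (simp add: F_def pen)
    moreover have "\<beta>*\<epsilon>*t = \<beta>*(xb+\<epsilon>-yb)" using d_t d_def by (simp add: algebra_simps)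
    ultimately show ?thesis by (simp add: algebra_simps)
  qed
  have tcrude: "\<bar>t\<bar> \<le> 2*C+1"
  proof -
    have "w j1 (xb+\<epsilon>) - w j1 yb \<le> 2*C" using Cw[OF j1, of "xb+\<epsilon>"] Cw[OF j1 ybl(1)] xbl eps0 by (simp add: abs_le_iff)
    moreover have "\<beta>*\<epsilon> \<le> 1"
    proof -
      have "\<beta>*\<epsilon> \<le> \<beta>*\<epsilon>*(2*C+1)" using beta0 eps0 C0 by simp
      thus ?thesis using eps0 eta1 by linarith
    qed
    moreover have "\<beta>*\<epsilon>*t \<le> \<beta>*\<epsilon>*\<bar>t\<bar>" using beta0 eps0 by (intro mult_left_mono) auto
    moreover have "\<beta>*\<epsilon>*\<bar>t\<bar> \<le> \<bar>t\<bar>" using mult_right_mono[OF \<open>\<beta>*\<epsilon> \<le> 1\<close>, of "\<bar>t\<bar>"] by simp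
    moreover have "t^2 = \<bar>t\<bar>*\<bar>t\<bar>" by (simp add: power2_eq_square)
    ultimately have sq: "\<bar>t\<bar>*\<bar>t\<bar> \<le> 2*C + \<bar>t\<bar>" using tineq by linarith
    show ?thesis
    proof (rule ccontr)
      assume "\<not> \<bar>t\<bar> \<le> 2*C+1"
      hence h: "\<bar>t\<bar> > 2*C+1" by simp
      have "(2*C+1)*\<bar>t\<bar> < \<bar>t\<bar>*\<bar>t\<bar>" using h C0 by (intro mult_strict_right_mono) auto
      moreover have "2*C*1 \<le> 2*C*\<bar>t\<bar>" using h C0 by (intro mult_left_mono) auto
      ultimately show False using sq by (simp add: algebra_simps)
    qed
  qed
  have dsmall: "\<bar>xb + \<epsilon> - yb\<bar> < \<delta>"
  proof -
    have "xb + \<epsilon> - yb = \<epsilon>*t" using d_t d_def by simp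
    hence "\<bar>xb + \<epsilon> - yb\<bar> = \<epsilon>*\<bar>t\<bar>" using eps0 by (simp add: abs_mult)
    also have "\<dots> \<le> \<epsilon>*(2*C+1)" using tcrude eps0 by (intro mult_left_mono) auto
    finally show ?thesis using eps0 delta by linarith
  qed
  have t_small: "\<bar>t\<bar> \<le> \<tau>"
  proof -
    have "\<bar>w j1 (xb+\<epsilon>) - w j1 yb\<bar> < \<eta>"
      by (rule delta(2)[OF j1 _ _ dsmall]) (use xbl ybl eps0 in \<open>auto simp: S_def\<close>)
    moreover have "\<beta>*\<epsilon>*t \<le> \<beta>*\<epsilon>*(2*C+1)" using beta0 eps0 tcrude by (intro mult_left_mono) auto
    ultimately have "t^2 \<le> 2*\<eta>" using tineq eps0 by (simp only: abs_less_iff; argo)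
    hence "\<bar>t\<bar>^2 \<le> \<tau>^2" using eta0 by (simp only: power2_abs; argo)
    moreover have "0 \<le> \<tau>" using tau0 by simp
    ultimately show ?thesis by (rule power2_le_imp_le)
  qed
  have ybint: "yb > xl"
  proof -
    have "yb = xb + \<epsilon> - \<epsilon>*t" using d_t d_def by simp
    moreover have "\<epsilon>*t \<le> \<epsilon>*(1/2)" using t_small tau0 eps0 by (intro mult_left_mono) auto
    ultimately show ?thesis using xbl eps0 by linarith
  qed
  define pA where "pA = 2*d/\<epsilon>^2 + \<beta>"
  define pB where "pB = 2*d/\<epsilon>^2 - \<beta>"
  define \<phi>1 where "\<phi>1 = (\<lambda>x::real. (1/\<epsilon>^2)*x*x + (2*(\<epsilon>-yb)/\<epsilon>^2 + \<beta>)*x + (\<epsilon>-yb)^2/\<epsilon>^2)"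
  define \<phi>2 where "\<phi>2 = (\<lambda>x::real. (-1/\<epsilon>^2)*x*x + (2*(xb+\<epsilon>)/\<epsilon>^2 - \<beta>)*x + (- ((xb+\<epsilon>)^2/\<epsilon>^2)))"
  have \<phi>1_eq: "\<phi>1 x = (x - yb + \<epsilon>)^2/\<epsilon>^2 + \<beta>*x" for x
    using eps0 unfolding \<phi>1_def by (simp add: field_simps power2_eq_square)
  have \<phi>2_eq: "\<phi>2 x = - ((xb - x + \<epsilon>)^2/\<epsilon>^2) - \<beta>*x" for x
    using eps0 unfolding \<phi>2_def by (simp add: field_simps power2_eq_square)
  have D1: "deriv \<phi>1 xb = pA"
    unfolding \<phi>1_def deriv_quad pA_def d_def using eps0 by (simp add: field_simps power2_eq_square)
  have D2: "deriv \<phi>2 yb = pB"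
    unfolding \<phi>2_def deriv_quad pB_def d_def using eps0 by (simp add: field_simps power2_eq_square)
  have S1: "smooth_fun \<phi>1" unfolding \<phi>1_def by (rule smooth_quad)
  have S2: "smooth_fun \<phi>2" unfolding \<phi>2_def by (rule smooth_quad)
  have LM1: "loc_max_rel {xl..} (\<lambda>x. u j1 x - \<phi>1 x) xb"
    unfolding loc_max_rel_def
  proof (intro exI[of _ 1] conjI ballI impI)
    fix z assume "z \<in> {xl..}"
    hence "F j1 z yb \<le> F j1 xb yb" using glob[OF j1 _ ybl(1)] by auto
    moreover have "F j1 z yb = u j1 z - \<phi>1 z - w j1 yb - \<beta>*(yb - 2*xl)" for z
      unfolding F_def \<phi>1_eq by (simp add: algebra_simps)
    ultimately show "u j1 z - \<phi>1 z \<le> u j1 xb - \<phi>1 xb" by simp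
  qed simp
  have LM2: "loc_min_rel {xl..} (\<lambda>x. w j1 x - \<phi>2 x) yb"
    unfolding loc_min_rel_def
  proof (intro exI[of _ 1] conjI ballI impI)
    fix z assume "z \<in> {xl..}"
    hence "F j1 xb z \<le> F j1 xb yb" using glob[OF j1 xbl(1)] by auto
    moreover have "F j1 xb z = u j1 xb - (w j1 z - \<phi>2 z) - \<beta>*(xb - 2*xl)" for z
      unfolding F_def \<phi>2_eq by (simp add: algebra_simps)
    ultimately show "w j1 yb - \<phi>2 yb \<le> w j1 z - \<phi>2 z" by simp
  qed simp
  have subA: "\<forall>\<phi> j x0. smooth_fun \<phi> \<longrightarrow> j \<in> {1,2} \<longrightarrow> x0 \<in> {xl..} \<longrightarrow>
        loc_max_rel {xl..} (\<lambda>x. u j x - \<phi> x) x0 \<longrightarrow>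
        ereal (\<rho> * u j x0) \<le> Ham r \<gamma> x0 (y j) (deriv \<phi> x0) + ereal (lam j * (u (3 - j) x0 - u j x0))"
    using sub unfolding visc_sub_def by blast
  have supA: "\<forall>\<phi> j x0. smooth_fun \<phi> \<longrightarrow> j \<in> {1,2} \<longrightarrow> x0 \<in> {xl<..} \<longrightarrow>
        loc_min_rel {xl..} (\<lambda>x. w j x - \<phi> x) x0 \<longrightarrow>
        ereal (\<rho> * w j x0) \<ge> Ham r \<gamma> x0 (y j) (deriv \<phi> x0) + ereal (lam j * (w (3 - j) x0 - w j x0))"
    using sup unfolding visc_super_def by blast
  have I1: "ereal (\<rho> * u j1 xb) \<le> Ham r \<gamma> xb (y j1) pA + ereal (lam j1 * (u (3 - j1) xb - u j1 xb))"
    using subA[rule_format, OF S1 j1 _ LM1] xbl D1 by simp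
  have I2: "ereal (\<rho> * w j1 yb) \<ge> Ham r \<gamma> yb (y j1) pB + ereal (lam j1 * (w (3 - j1) yb - w j1 yb))"
    using supA[rule_format, OF S2 j1 _ LM2] ybint D2 by simp
  define Kc where "Kc = (r*xb + y j1)*pA - (r*yb + y j1)*pB"
  have HS: "Ham r \<gamma> xb (y j1) pA \<le> Ham r \<gamma> yb (y j1) pB + ereal Kc"
    unfolding Kc_def by (rule Ham_shift) (use beta0 in \<open>simp add: pA_def pB_def\<close>)
  have "Ham r \<gamma> yb (y j1) pB \<noteq> \<infinity>"
  proof
    assume "Ham r \<gamma> yb (y j1) pB = \<infinity>"
    thus False using I2 by simp
  qed
  then obtain h where h: "Ham r \<gamma> yb (y j1) pB = ereal h" using Ham_not_minf by (cases "Ham r \<gamma> yb (y j1) pB") auto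
  have R1': "\<rho> * u j1 xb \<le> h + Kc + lam j1 * (u (3 - j1) xb - u j1 xb)"
  proof -
    have "ereal (\<rho> * u j1 xb) \<le> (ereal h + ereal Kc) + ereal (lam j1 * (u (3 - j1) xb - u j1 xb))"
      using I1 HS h by (metis add_right_mono order_trans)
    thus ?thesis by simp
  qed
  have R2': "h + lam j1 * (w (3 - j1) yb - w j1 yb) \<le> \<rho> * w j1 yb" using I2 h by simp
  have j1': "3 - j1 \<in> {1,2}" using j1 by auto
  have coup: "lam j1 * (u (3 - j1) xb - u j1 xb) - lam j1 * (w (3 - j1) yb - w j1 yb) \<le> 0"
  proof -
    have "F (3 - j1) xb yb \<le> F j1 xb yb" using glob[OF j1' xbl(1) ybl(1)] .
    hence "(u (3 - j1) xb - u j1 xb) - (w (3 - j1) yb - w j1 yb) \<le> 0" unfolding F_def by simp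
    moreover have "lam j1 \<ge> 0" using j1 l1 l2 by auto
    ultimately have "lam j1 * ((u (3 - j1) xb - u j1 xb) - (w (3 - j1) yb - w j1 yb)) \<le> 0"
      by (simp add: mult_nonneg_nonpos)
    thus ?thesis by (simp add: algebra_simps)
  qed
  have main: "\<rho> * (u j1 xb - w j1 yb) \<le> Kc" using R1' R2' coup by (simp add: algebra_simps)
  have Kc_eq: "Kc = 2*r*(t^2 - t) + \<beta>*(r*(xb+yb) + 2*y j1)"
  proof -
    have "xb - yb = \<epsilon>*t - \<epsilon>" using d_t d_def by simp
    hence xe: "xb = yb + \<epsilon>*t - \<epsilon>" by simp
    show ?thesis unfolding Kc_def pA_def pB_def d_t xe using eps0
      by (simp add: field_simps power2_eq_square)
  qed
  have uw: "u j1 xb - w j1 yb = F j1 xb yb + t^2 + \<beta>*(xb+yb-2*xl)" by (simp add: F_def pen)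
  have a: "\<rho>*(\<delta>0/2) \<le> \<rho>*F j1 xb yb" using Fmax rho by (intro mult_left_mono) auto
  have b: "\<beta>*((\<rho>-r)*(xb+yb-2*xl)) \<ge> 0" using beta0 rr xbl ybl by simp
  have c0: "t^2 \<le> \<bar>t\<bar>"
  proof -
    have "t^2 = \<bar>t\<bar>*\<bar>t\<bar>" by (simp add: power2_eq_square)
    also have "\<dots> \<le> 1*\<bar>t\<bar>" using t_small tau0 by (intro mult_right_mono) auto
    finally show ?thesis by simp
  qed
  have c: "2*r*(t^2 - t) \<le> 4*\<bar>r\<bar>*\<tau>"
  proof -
    have "r*(t^2 - t) \<le> \<bar>r\<bar>*\<bar>t^2 - t\<bar>" by (metis abs_ge_self abs_mult)
    also have "\<dots> \<le> \<bar>r\<bar>*(2*\<tau>)"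
    proof (rule mult_left_mono)
      show "\<bar>t^2 - t\<bar> \<le> 2*\<tau>" using c0 t_small zero_le_power2[of t] by argo
    qed simp
    finally show ?thesis by (simp add: algebra_simps)
  qed
  have dd: "\<beta>*(2*y j1 + 2*r*xl) \<le> \<beta>*A"
  proof -
    have "y j1 \<le> \<bar>y 1\<bar> + \<bar>y 2\<bar>" using j1 by auto
    moreover have "r*xl \<le> \<bar>r\<bar>*\<bar>xl\<bar>" by (metis abs_ge_self abs_mult)
    ultimately have "2*y j1 + 2*r*xl \<le> A" unfolding A_def by linarith
    thus ?thesis using beta0 by (intro mult_left_mono) auto
  qed
  have "\<rho>*(u j1 xb - w j1 yb) = \<rho>*F j1 xb yb + \<rho>*t^2 + \<beta>*((\<rho>-r)*(xb+yb-2*xl)) + \<beta>*r*(xb+yb) - 2*\<beta>*r*xl"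
    unfolding uw by (simp add: algebra_simps)
  moreover have "\<rho>*t^2 \<ge> 0" using rho by simp
  moreover have "Kc = 2*r*(t^2 - t) + \<beta>*(2*y j1 + 2*r*xl) + \<beta>*r*(xb+yb) - 2*\<beta>*r*xl"
    unfolding Kc_eq by (simp add: algebra_simps)
  ultimately have "\<rho>*(\<delta>0/2) \<le> 4*\<bar>r\<bar>*\<tau> + \<beta>*A" using main a b c dd by linarith
  moreover have "\<rho>*\<delta>0 > 0" using rho d0 by simp
  ultimately show False using tau0(3) beta0(3) by linarith
qed

theorem mainTheorem5:
  fixes \<rho> r \<gamma> xl :: real and y lam :: "nat \<Rightarrow> real" and v w :: "nat \<Rightarrow> real \<Rightarrow> real"
  assumes "\<rho> > 0" and "r < \<rho>"
    and "0 < y 1" and "y 1 < y 2"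
    and "\<gamma> > 1"
    and "xl \<le> 0" and "\<rho> * xl + y 1 > 0" and "\<rho> * xl + y 2 > 0"
    and "lam 1 \<ge> 0" and "lam 2 \<ge> 0"
    and "bounded_pair xl v" and "constrained_visc_sol \<rho> r \<gamma> y lam xl v"
    and "bounded_pair xl w" and "constrained_visc_sol \<rho> r \<gamma> y lam xl w"
  shows "\<forall>j\<in>{1,2}. \<forall>x\<in>{xl..}. v j x = w j x"
proof (intro ballI)
  fix j :: nat and x :: real assume j: "j \<in> {1,2}" and x: "x \<in> {xl..}"
  have v1: "\<forall>j\<in>{1,2}. continuous_on {xl..} (v j)" "visc_super \<rho> r \<gamma> y lam xl {xl<..} v" "visc_sub \<rho> r \<gamma> y lam xl {xl..} v"
    using assms(12) unfolding constrained_visc_sol_def by auto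
  have w1: "\<forall>j\<in>{1,2}. continuous_on {xl..} (w j)" "visc_super \<rho> r \<gamma> y lam xl {xl<..} w" "visc_sub \<rho> r \<gamma> y lam xl {xl..} w"
    using assms(14) unfolding constrained_visc_sol_def by auto
  have "v j x \<le> w j x"
    by (rule comparison[OF assms(1,2,9,10) v1(1) w1(1) assms(11,13) v1(3) w1(2) j]) (use x in auto)
  moreover have "w j x \<le> v j x"
    by (rule comparison[OF assms(1,2,9,10) w1(1) v1(1) assms(13,11) w1(3) v1(2) j]) (use x in auto)
  ultimately show "v j x = w j x" by simp
qed

end
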